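(* Let $g\in L^2(\mathbb R)$ have compact support, and suppose that for every $\epsilon>0$ there is a measurable set $E\subset[0,1]$ with $|E|>0$ such that $\big|\sum_{n\in\mathbb Z}g(t+n)\big|<\epsilon$ for a.e. $t\in E$. Then $(g,1,1)$ is not a Weyl–Heisenberg frame for $L^2(\mathbb R)$.
   Context: For $g\in L^2(\mathbb R)$ and $a,b>0$, $(g,a,b)$ is a Weyl–Heisenberg frame if $(E_{mb}T_{na}g)_{m,n\in\mathbb Z}$ is a frame for $L^2(\mathbb R)$, where $T_{a}g(t)=g(t-a)$ and $E_{b}g(t)=e^{2\pi i bt}g(t)$. $|E|$ denotes Lebesgue measure. *)

theory Defs
  imports "HOL-Analysis.Analysis"
begin

definition L2 :: "(real \<Rightarrow> complex) set" where
  "L2 = {f. f \<in> borel_measurable lebesgue \<and> integrable lebesgue (\<lambda>t. (cmod (f t))^2)}"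

definition l2inner :: "(real \<Rightarrow> complex) \<Rightarrow> (real \<Rightarrow> complex) \<Rightarrow> complex" where
  "l2inner f h = (LINT t|lebesgue. f t * cnj (h t))"

definition l2norm_sq :: "(real \<Rightarrow> complex) \<Rightarrow> real" where
  "l2norm_sq f = (LINT t|lebesgue. (cmod (f t))^2)"

definition transl :: "real \<Rightarrow> (real \<Rightarrow> complex) \<Rightarrow> real \<Rightarrow> complex" where
  "transl a g = (\<lambda>t. g (t - a))"

definition modul :: "real \<Rightarrow> (real \<Rightarrow> complex) \<Rightarrow> real \<Rightarrow> complex" where
  "modul b g = (\<lambda>t. exp (\<i> * complex_of_real (2 * pi * b * t)) * g t)"

definition WH_frame :: "(real \<Rightarrow> complex) \<Rightarrow> real \<Rightarrow> real \<Rightarrow> bool" where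
  "WH_frame g a b \<longleftrightarrow>
     (\<exists>A B. 0 < A \<and> 0 < B \<and>
       (\<forall>f \<in> L2.
          (\<lambda>(m::int, n::int). (cmod (l2inner f (modul (of_int m * b) (transl (of_int n * a) g))))^2)
             summable_on UNIV \<and>
          A * l2norm_sq f \<le>
            (\<Sum>\<^sub>\<infinity>(m::int, n::int) \<in> UNIV. (cmod (l2inner f (modul (of_int m * b) (transl (of_int n * a) g))))^2) \<and>
          (\<Sum>\<^sub>\<infinity>(m::int, n::int) \<in> UNIV. (cmod (l2inner f (modul (of_int m * b) (transl (of_int n * a) g))))^2)
            \<le> B * l2norm_sq f))"

end

theory Submission
  imports Defs
begin


definition ee :: "int \<Rightarrow> real \<Rightarrow> complex" where
  "ee m t = exp (\<i> * complex_of_real (2 * pi * of_int m * t))"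

lemma ee_mult_cnj: "ee m t * cnj (ee m' t) = ee (m - m') t"
proof -
  have "cnj (ee m' t) = exp (- (\<i> * complex_of_real (2 * pi * of_int m' * t)))"
    unfolding ee_def by (simp add: exp_cnj)
  then show ?thesis unfolding ee_def by (simp add: exp_add[symmetric] algebra_simps)
qed

lemma norm_ee[simp]: "cmod (ee m t) = 1"
  unfolding ee_def by (simp add: norm_exp_eq_Re)

lemma ee_cont[continuous_intros]: "continuous_on S (ee m)"
  unfolding ee_def by (intro continuous_intros)

lemma ident_meas[measurable]: "(\<lambda>x::real. x) \<in> borel_measurable lebesgue"
  using id_borel_measurable_lebesgue by (simp add: id_def)

lemma cnj_meas[measurable]: "f \<in> borel_measurable M \<Longrightarrow> (\<lambda>x. cnj (f x)) \<in> borel_measurable M"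
  by (rule borel_measurable_continuous_on[where f=cnj]) (auto intro: continuous_intros)

lemma ee_meas[measurable]: "ee m \<in> borel_measurable lebesgue"
  unfolding ee_def by measurable

lemma integrable_bsupp:
  fixes f :: "real \<Rightarrow> 'a::{banach, second_countable_topology}"
  assumes "f \<in> borel_measurable lebesgue" "\<And>t. norm (f t) \<le> B" "\<And>t. t \<notin> {a..b} \<Longrightarrow> f t = 0"
  shows "integrable lebesgue f"
  by (rule integrableI_bounded_set[where A="{a..b}" and B=B]) (use assms in \<open>auto simp: emeasure_lborel_Icc_eq\<close>)

lemma ee_integral: "(LINT t|lebesgue. indicator {0..1} t *\<^sub>R ee k t) = (if k = 0 then 1 else 0)"
proof -
  have si: "set_integrable lebesgue {0..1} (ee k)"
    unfolding set_integrable_def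
  proof (rule integrable_bsupp[where B=1 and a=0 and b=1])
    show "(\<lambda>x. indicat_real {0..1} x *\<^sub>R ee k x) \<in> borel_measurable lebesgue" by measurable
  qed (auto simp: indicator_def)
  have "(LINT t|lebesgue. indicator {0..1} t *\<^sub>R ee k t) = integral {0..1} (ee k)"
    using set_lebesgue_integral_eq_integral(2)[OF si] unfolding set_lebesgue_integral_def by simp
  also have "\<dots> = (if k = 0 then 1 else 0)"
  proof (cases "k = 0")
    case True
    have "ee 0 = (\<lambda>_. 1)" by (simp add: ee_def fun_eq_iff)
    then show ?thesis using True by simp
  next
    case False
    define a where "a = 2 * complex_of_real pi * of_int k * \<i>"
    have a0: "a \<noteq> 0" using False by (simp add: a_def)
    have "ee k = (\<lambda>t. exp (a * complex_of_real t))"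
      by (auto simp: ee_def a_def fun_eq_iff algebra_simps)
    then have "integral {0..1} (ee k) = (exp (a * of_real 1) - 1) / a"
      using integral_exp[of 1 a] a0 by simp
    also have "exp (a * of_real 1) = 1"
      unfolding a_def using exp_integer_2pi[of "of_int k"] by (simp add: algebra_simps)
    finally show ?thesis using False by simp
  qed
  finally show ?thesis .
qed

lemma int_comb:
  fixes a b c :: "'a \<Rightarrow> real"
  assumes "integrable M a" "integrable M b" "integrable M c"
  shows "(LINT t|M. a t - 2 * b t + c t) = (LINT t|M. a t) - 2 * (LINT t|M. b t) + (LINT t|M. c t)"
  using assms by simp

lemma bessel:
  fixes h :: "real \<Rightarrow> complex"
  assumes hm[measurable]: "h \<in> borel_measurable lebesgue" and hb: "\<And>t. cmod (h t) \<le> C"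
    and hs: "\<And>t. t \<notin> {0..1} \<Longrightarrow> h t = 0" and M: "finite M"
  shows "(\<Sum>m\<in>M. (cmod (LINT t|lebesgue. h t * cnj (ee m t)))^2) \<le> (LINT t|lebesgue. (cmod (h t))^2)"
proof -
  define c where "c m = (LINT t|lebesgue. h t * cnj (ee m t))" for m
  define p where "p t = (\<Sum>m\<in>M. c m * ee m t)" for t
  define q where "q t = indicator {0..1} t *\<^sub>R p t" for t
  define S where "S = (\<Sum>m\<in>M. (cmod (c m))^2)"
  define D where "D = (\<Sum>m\<in>M. cmod (c m))"
  have pm[measurable]: "p \<in> borel_measurable lebesgue" unfolding p_def by measurable
  have qm[measurable]: "q \<in> borel_measurable lebesgue" unfolding q_def by measurable
  have pb: "cmod (p t) \<le> D" for t
  proof -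
    have "cmod (p t) \<le> (\<Sum>m\<in>M. cmod (c m * ee m t))" unfolding p_def by (rule norm_sum)
    also have "\<dots> = D" by (simp add: D_def norm_mult)
    finally show ?thesis .
  qed
  have D0: "0 \<le> D" unfolding D_def by (simp add: sum_nonneg)
  have C0: "0 \<le> C" using hb[of 0] norm_ge_zero[of "h 0"] by linarith
  have qb: "cmod (q t) \<le> D" for t using pb[of t] D0 by (simp add: q_def indicator_def)
  have qs: "t \<notin> {0..1} \<Longrightarrow> q t = 0" for t by (simp add: q_def)
  have hq: "h t * cnj (q t) = h t * cnj (p t)" for t
    by (cases "t \<in> {0..1}") (simp_all add: q_def hs)
  have int_hee: "integrable lebesgue (\<lambda>t. h t * cnj (ee m t))" for m
    by (rule integrable_bsupp[where B=C and a=0 and b=1]) (measurable, auto simp: hs norm_mult hb)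
  have I1: "(LINT t|lebesgue. h t * cnj (p t)) = of_real S"
  proof -
    have "(\<lambda>t. h t * cnj (p t)) = (\<lambda>t. \<Sum>m\<in>M. cnj (c m) * (h t * cnj (ee m t)))"
      by (simp add: p_def sum_distrib_left algebra_simps fun_eq_iff)
    then have "(LINT t|lebesgue. h t * cnj (p t)) = (\<Sum>m\<in>M. cnj (c m) * c m)"
      using int_hee by (simp add: integral_sum c_def)
    also have "\<dots> = of_real S"
      unfolding S_def of_real_sum by (intro sum.cong refl) (metis complex_norm_square mult.commute)
    finally show ?thesis .
  qed
  have I2: "(LINT t|lebesgue. q t * cnj (q t)) = of_real S"
  proof -
    define F where "F k = (\<lambda>t. indicator {0..1} t *\<^sub>R ee k t)" for k
    have "(\<lambda>t. q t * cnj (q t)) = (\<lambda>t. \<Sum>m\<in>M. \<Sum>m'\<in>M. (c m * cnj (c m')) * F (m - m') t)"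
      by (auto simp: F_def q_def p_def sum_distrib_left sum_distrib_right indicator_def fun_eq_iff
          ee_mult_cnj[symmetric] algebra_simps intro: sum.swap)
    moreover have Fi: "integrable lebesgue (F k)" for k
      unfolding F_def
    proof (rule integrable_bsupp[where B=1 and a=0 and b=1])
      show "(\<lambda>x. indicat_real {0..1} x *\<^sub>R ee k x) \<in> borel_measurable lebesgue" by measurable
    qed (auto simp: indicator_def)
    moreover have "integral\<^sup>L lebesgue (F k) = (if k = 0 then 1 else 0)" for k
      unfolding F_def by (rule ee_integral)
    ultimately have "(LINT t|lebesgue. q t * cnj (q t)) =
        (\<Sum>m\<in>M. \<Sum>m'\<in>M. (c m * cnj (c m')) * (if m - m' = 0 then 1 else 0))"
      by (simp add: integral_sum Fi del: of_real_indicator)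
    also have "\<dots> = (\<Sum>m\<in>M. c m * cnj (c m))"
      using M by (simp add: if_distrib sum.delta cong: if_cong)
    also have "\<dots> = of_real S"
      unfolding S_def of_real_sum by (intro sum.cong refl) (metis complex_norm_square)
    finally show ?thesis .
  qed
  have eq: "(cmod (h t - q t))^2 = (cmod (h t))^2 - 2 * Re (h t * cnj (q t)) + Re (q t * cnj (q t))" for t
    unfolding cmod_power2 by (simp add: power2_eq_square algebra_simps)
  have i1: "integrable lebesgue (\<lambda>t. (cmod (h t))^2)"
    by (rule integrable_bsupp[where B="C^2" and a=0 and b=1])
       (measurable, auto simp: hs intro!: power_mono hb)
  have i2: "integrable lebesgue (\<lambda>t. h t * cnj (q t))"
    by (rule integrable_bsupp[where B="C*D" and a=0 and b=1])
       (measurable, auto simp: hs norm_mult intro!: mult_mono hb qb C0 D0)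
  have i3: "integrable lebesgue (\<lambda>t. q t * cnj (q t))"
    by (rule integrable_bsupp[where B="D*D" and a=0 and b=1])
       (measurable, auto simp: qs norm_mult intro!: mult_mono qb D0)
  have "0 \<le> (LINT t|lebesgue. (cmod (h t - q t))^2)" by simp
  also have "\<dots> = (LINT t|lebesgue. (cmod (h t))^2) - 2 * (LINT t|lebesgue. Re (h t * cnj (q t)))
       + (LINT t|lebesgue. Re (q t * cnj (q t)))"
    unfolding eq by (rule int_comb[OF i1 integrable_Re[OF i2] integrable_Re[OF i3]])
  also have "(LINT t|lebesgue. Re (h t * cnj (q t))) = S"
  proof -
    have "(LINT t|lebesgue. Re (h t * cnj (q t))) = Re (LINT t|lebesgue. h t * cnj (q t))"
      by (rule integral_bounded_linear[OF bounded_linear_Re i2])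
    also have "\<dots> = S" unfolding hq I1 by simp
    finally show ?thesis .
  qed
  also have "(LINT t|lebesgue. Re (q t * cnj (q t))) = S"
  proof -
    have "(LINT t|lebesgue. Re (q t * cnj (q t))) = Re (LINT t|lebesgue. q t * cnj (q t))"
      by (rule integral_bounded_linear[OF bounded_linear_Re i3])
    also have "\<dots> = S" unfolding I2 by simp
    finally show ?thesis .
  qed
  finally show ?thesis unfolding S_def c_def by simp
qed


lemma AE_transl:
  assumes "AE t in lebesgue. Q t"
  shows "AE s in lebesgue. Q (s + c)"
proof -
  from assms obtain N where N: "{x \<in> space lebesgue. \<not> Q x} \<subseteq> N" "emeasure lebesgue N = 0" "N \<in> sets lebesgue"
    by (rule AE_E)
  define N' where "N' = (\<lambda>x. 1 *\<^sub>R x + (-c)) ` N"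
  have e0: "emeasure lebesgue N' = 0"
    using emeasure_lebesgue_affine[of 1 "-c" N] N(2) by (simp add: N'_def)
  have "N' = (\<lambda>x. (-c) + x) ` N" by (simp add: N'_def add.commute)
  then have sN: "N' \<in> sets lebesgue" using lebesgue_sets_translation[OF N(3), of "-c"] by simp
  show ?thesis
  proof (rule AE_I'[of N'])
    show "N' \<in> null_sets lebesgue" using e0 sN by (simp add: null_sets_def)
    show "{x \<in> space lebesgue. \<not> Q (x + c)} \<subseteq> N'"
    proof
      fix x assume "x \<in> {x \<in> space lebesgue. \<not> Q (x + c)}"
      then have "x + c \<in> N" using N(1) by auto
      then show "x \<in> N'" unfolding N'_def by (rule rev_image_eqI) simp
    qed
  qed
qed

lemma meas_transl[measurable]:
  fixes f :: "real \<Rightarrow> 'b::euclidean_space"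
  assumes "f \<in> borel_measurable lebesgue"
  shows "(\<lambda>x. f (x + c)) \<in> borel_measurable lebesgue"
  using borel_measurable_affine[OF assms, of 1 c] by (simp add: add.commute)

lemma meas_transl_minus[measurable]:
  fixes f :: "real \<Rightarrow> 'b::euclidean_space"
  assumes "f \<in> borel_measurable lebesgue"
  shows "(\<lambda>x. f (x - c)) \<in> borel_measurable lebesgue"
  using meas_transl[OF assms, of "-c"] by simp

lemma int_transl:
  fixes f :: "real \<Rightarrow> 'b::euclidean_space"
  shows "(LINT x|lebesgue. f (x + c)) = (LINT x|lebesgue. f x)"
  using lebesgue_integral_real_affine[of 1 f c] by (simp add: add.commute)

lemma ee_shift: "ee m (s + of_int j) = ee m s"
proof -
  have "ee m (s + of_int j) = ee m s * exp (2 * of_real pi * of_int (m * j) * \<i>)"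
    unfolding ee_def by (simp add: exp_add[symmetric] algebra_simps)
  also have "exp (2 * of_real pi * of_int (m * j) * \<i>) = 1"
    using exp_integer_2pi[of "of_int (m * j)"] by (simp add: algebra_simps)
  finally show ?thesis by simp
qed

lemma coef:
  fixes g :: "real \<Rightarrow> complex" and E :: "real set"
  assumes gm[measurable]: "g \<in> borel_measurable lebesgue" and Em[measurable]: "E \<in> sets lebesgue"
    and Esub: "E \<subseteq> {0..<1}" and bnd: "\<And>s j. s \<in> E \<Longrightarrow> cmod (g (s + of_int j)) \<le> M"
  shows "l2inner (\<lambda>t. \<Sum>k<L. indicator E (t - real k)) (modul (of_int m * 1) (transl (of_int n * 1) g))
     = (LINT s|lebesgue. (indicator E s *\<^sub>R cnj (\<Sum>k<L. g (s + real k - of_int n))) * cnj (ee m s))"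
proof -
  define F where "F k t = indicator E (t - real k) * cnj (ee m t * g (t - of_int n))" for k t
  have l: "l2inner (\<lambda>t. \<Sum>k<L. indicator E (t - real k)) (modul (of_int m * 1) (transl (of_int n * 1) g))
     = (LINT t|lebesgue. (\<Sum>k<L. F k t))"
    unfolding l2inner_def modul_def transl_def F_def ee_def
    by (simp add: sum_distrib_right)
  have Fi: "integrable lebesgue (F k)" for k
  proof (rule integrable_bsupp[where B="max 0 M" and a="real k" and b="real k + 1"])
    show "F k \<in> borel_measurable lebesgue" unfolding F_def by measurable
    show "cmod (F k t) \<le> max 0 M" for t
    proof (cases "t - real k \<in> E")
      case True
      have "g (t - of_int n) = g ((t - real k) + of_int (int k - n))" by simp
      then have "cmod (g (t - of_int n)) \<le> M" using bnd[OF True] by metis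
      then show ?thesis using True by (simp add: F_def norm_mult)
    qed (simp add: F_def)
    show "F k t = 0" if "t \<notin> {real k..real k + 1}" for t
      using that Esub by (auto simp: F_def indicator_def)
  qed
  have Gi: "integrable lebesgue (\<lambda>s. indicator E s * cnj (g (s + real k - of_int n)) * cnj (ee m s))" for k
  proof (rule integrable_bsupp[where B="max 0 M" and a=0 and b=1])
    show "(\<lambda>s. indicator E s * cnj (g (s + real k - of_int n)) * cnj (ee m s)) \<in> borel_measurable lebesgue"
      by measurable
    show "cmod (indicator E s * cnj (g (s + real k - of_int n)) * cnj (ee m s)) \<le> max 0 M" for s
    proof (cases "s \<in> E")
      case True
      have "g (s + real k - of_int n) = g (s + of_int (int k - n))" by (simp add: algebra_simps)
      then have "cmod (g (s + real k - of_int n)) \<le> M" using bnd[OF True] by metis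
      then show ?thesis using True by (simp add: norm_mult)
    qed simp
    show "indicator E s * cnj (g (s + real k - of_int n)) * cnj (ee m s) = 0" if "s \<notin> {0..1}" for s
      using that Esub by (auto simp: indicator_def)
  qed
  have "(LINT t|lebesgue. (\<Sum>k<L. F k t)) = (\<Sum>k<L. LINT t|lebesgue. F k t)"
    using Fi by (simp add: integral_sum)
  also have "\<dots> = (\<Sum>k<L. LINT s|lebesgue. F k (s + real k))"
    by (simp add: int_transl)
  also have "\<dots> = (\<Sum>k<L. LINT s|lebesgue. indicator E s * cnj (g (s + real k - of_int n)) * cnj (ee m s))"
  proof (intro sum.cong refl arg_cong[where f="integral\<^sup>L lebesgue"] ext)
    fix k s
    have "ee m (s + real k) = ee m s" using ee_shift[of m s "int k"] by simp
    then show "F k (s + real k) = indicator E s * cnj (g (s + real k - of_int n)) * cnj (ee m s)"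
      by (simp add: F_def)
  qed
  also have "\<dots> = (LINT s|lebesgue. (\<Sum>k<L. indicator E s * cnj (g (s + real k - of_int n)) * cnj (ee m s)))"
    using Bochner_Integration.integral_sum[where I="{..<L}" and f="\<lambda>k s. indicator E s * cnj (g (s + real k - of_int n)) * cnj (ee m s)", OF Gi] by simp
  also have "\<dots> = (LINT s|lebesgue. (indicator E s *\<^sub>R cnj (\<Sum>k<L. g (s + real k - of_int n))) * cnj (ee m s))"
    by (intro arg_cong[where f="integral\<^sup>L lebesgue"] ext)
       (simp add: sum_distrib_right indicator_def)
  finally show ?thesis using l by simp
qed


lemma ind_sum01:
  assumes Esub: "E \<subseteq> {0..<1}"
  shows "(\<Sum>k<L. indicator E (t - real k) :: real) = 0 \<or> (\<Sum>k<L. indicator E (t - real k) :: real) = 1"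
proof (cases "\<exists>k<L. t - real k \<in> E")
  case True
  then obtain k0 where k0: "k0 < L" "t - real k0 \<in> E" by blast
  have "(\<Sum>k<L. indicator E (t - real k) :: real) = (\<Sum>k<L. if k = k0 then 1 else 0)"
  proof (rule sum.cong[OF refl])
    fix k assume "k \<in> {..<L}"
    show "indicator E (t - real k) = (if k = k0 then 1 else (0::real))"
    proof (cases "k = k0")
      case False
      have "t - real k \<notin> E"
      proof
        assume "t - real k \<in> E"
        then have "t - real k \<in> {0..<1}" "t - real k0 \<in> {0..<1}" using k0(2) Esub by auto
        then have "\<bar>real k - real k0\<bar> < 1" by (auto simp: abs_less_iff)
        then have "k = k0" by linarith
        with False show False by simp
      qed
      then show ?thesis using False by simp
    qed (use k0 in simp)
  qed
  also have "\<dots> = 1" using k0(1) by simp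
  finally show ?thesis by simp
next
  case False
  then show ?thesis by (simp add: indicator_def)
qed

lemma f_L2:
  assumes Em[measurable]: "E \<in> sets lebesgue" and Esub: "E \<subseteq> {0..<1}"
  shows "(\<lambda>t. \<Sum>k<L. indicator E (t - real k) :: complex) \<in> L2"
    and "l2norm_sq (\<lambda>t. \<Sum>k<L. indicator E (t - real k) :: complex) = real L * measure lebesgue E"
proof -
  define fr where "fr t = (\<Sum>k<L. indicator E (t - real k) :: real)" for t
  have feq: "(\<Sum>k<L. indicator E (t - real k) :: complex) = of_real (fr t)" for t
    unfolding fr_def of_real_sum by (intro sum.cong refl) (simp add: indicator_def)
  have sq: "(cmod (\<Sum>k<L. indicator E (t - real k) :: complex))^2 = fr t" for t
    using ind_sum01[OF Esub, where L=L and t=t] unfolding feq fr_def[symmetric] by auto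
  have frm[measurable]: "fr \<in> borel_measurable lebesgue" unfolding fr_def by measurable
  have fri: "integrable lebesgue fr"
  proof (rule integrable_bsupp[where B=1 and a=0 and b="real L"])
    show "norm (fr t) \<le> 1" for t using ind_sum01[OF Esub, where L=L and t=t] by (auto simp: fr_def)
    show "fr t = 0" if "t \<notin> {0..real L}" for t
    proof -
      have "t - real k \<notin> E" if "k < L" for k
        using that \<open>t \<notin> {0..real L}\<close> Esub by force
      then show ?thesis by (simp add: fr_def)
    qed
  qed simp
  have sqf: "(\<lambda>t. (cmod (\<Sum>k<L. indicator E (t - real k) :: complex))^2) = fr"
    using sq by (intro ext)
  show "(\<lambda>t. \<Sum>k<L. indicator E (t - real k) :: complex) \<in> L2"
    unfolding L2_def
  proof (intro CollectI conjI)
    show "(\<lambda>t. \<Sum>k<L. indicator E (t - real k) :: complex) \<in> borel_measurable lebesgue" by measurable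
    show "integrable lebesgue (\<lambda>t. (cmod (\<Sum>k<L. indicator E (t - real k) :: complex))^2)"
      unfolding sqf by (rule fri)
  qed
  have fin: "emeasure lebesgue E < \<infinity>"
  proof -
    have "emeasure lebesgue E \<le> emeasure lebesgue {0..1::real}"
      by (rule emeasure_mono) (use Esub in auto)
    then show ?thesis by (simp add: order_le_less_trans)
  qed
  have ii: "integrable lebesgue (\<lambda>t. indicator E (t - real k) :: real)" for k
  proof (rule integrable_bsupp[where B=1 and a="real k" and b="real k + 1"])
    show "(\<lambda>t. indicator E (t - real k) :: real) \<in> borel_measurable lebesgue" by measurable
  qed (use Esub in \<open>auto simp: indicator_def\<close>)
  have "l2norm_sq (\<lambda>t. \<Sum>k<L. indicator E (t - real k) :: complex) = (LINT t|lebesgue. fr t)"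
    unfolding l2norm_sq_def sqf ..
  also have "\<dots> = (\<Sum>k<L. LINT t|lebesgue. indicator E (t - real k))"
    unfolding fr_def using ii by simp
  also have "\<dots> = (\<Sum>k<L. LINT t|lebesgue. indicator E t)"
  proof (rule sum.cong[OF refl])
    fix k
    show "(LINT t|lebesgue. indicator E (t - real k)) = (LINT t|lebesgue. indicator E t :: real)"
      using int_transl[of "indicator E :: real \<Rightarrow> real" "- real k"] by simp
  qed
  also have "\<dots> = real L * measure lebesgue E" by simp
  finally show "l2norm_sq (\<lambda>t. \<Sum>k<L. indicator E (t - real k) :: complex) = real L * measure lebesgue E" .
qed

lemma sum_reindex_int: "(\<Sum>k<L. F (int k - n)) = (\<Sum>j\<in>{-n..int L - 1 - n}. F j)"
  by (rule sum.reindex_bij_witness[where i="\<lambda>j. nat (j + n)" and j="\<lambda>k. int k - n"]) auto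



theorem proposition2p2:
  fixes g :: "real \<Rightarrow> complex"
  assumes "g \<in> L2"
    and "\<exists>K. compact K \<and> (AE t in lebesgue. t \<notin> K \<longrightarrow> g t = 0)"
    and "\<forall>\<epsilon>>0. \<exists>E. E \<in> sets lebesgue \<and> E \<subseteq> {0..1} \<and> measure lebesgue E > 0 \<and>
            (AE t in lebesgue. t \<in> E \<longrightarrow> cmod (\<Sum>\<^sub>\<infinity>n::int. g (t + of_int n)) < \<epsilon>)"
  shows "\<not> WH_frame g 1 1"
proof
  assume "WH_frame g 1 1"
  then obtain A B where A0: "0 < A" and fr: "\<forall>f \<in> L2.
          (\<lambda>(m::int, n::int). (cmod (l2inner f (modul (of_int m * 1) (transl (of_int n * 1) g))))^2)
             summable_on UNIV \<and>
          A * l2norm_sq f \<le>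
            (\<Sum>\<^sub>\<infinity>(m::int, n::int) \<in> UNIV. (cmod (l2inner f (modul (of_int m * 1) (transl (of_int n * 1) g))))^2)"
    unfolding WH_frame_def by blast
  have gm[measurable]: "g \<in> borel_measurable lebesgue" using assms(1) by (simp add: L2_def)
  obtain K where "compact K" and K: "AE t in lebesgue. t \<notin> K \<longrightarrow> g t = 0" using assms(2) by blast
  obtain B0 where B0: "\<And>x. x \<in> K \<Longrightarrow> \<bar>x\<bar> \<le> B0"
    using compact_imp_bounded[OF \<open>compact K\<close>] unfolding bounded_real by blast
  define N :: nat where "N = nat \<lceil>B0\<rceil>"
  have KN: "\<bar>x\<bar> \<le> real N" if "x \<in> K" for x
    using B0[OF that] unfolding N_def by linarith
  have gz: "AE t in lebesgue. real N < \<bar>t\<bar> \<longrightarrow> g t = 0"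
    using K by eventually_elim (use KN in force)
  define \<epsilon> where "\<epsilon> = sqrt (A / 2)"
  have e0: "0 < \<epsilon>" using A0 by (simp add: \<epsilon>_def)
  have e2: "\<epsilon>^2 = A / 2" using A0 by (simp add: \<epsilon>_def)
  obtain E where Em[measurable]: "E \<in> sets lebesgue" and Esub: "E \<subseteq> {0..1}" and Epos: "measure lebesgue E > 0"
    and Eae: "AE t in lebesgue. t \<in> E \<longrightarrow> cmod (\<Sum>\<^sub>\<infinity>n::int. g (t + of_int n)) < \<epsilon>"
    using assms(3) e0 by blast
  define J where "J = {- int N - 1 .. int N}"
  have finJ: "finite J" by (simp add: J_def)
  define P where "P s \<longleftrightarrow> (\<forall>j::int. real N < \<bar>s + of_int j\<bar> \<longrightarrow> g (s + of_int j) = 0)" for s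
  have AP: "AE s in lebesgue. P s"
    unfolding P_def AE_all_countable
  proof
    fix j :: int
    show "AE s in lebesgue. real N < \<bar>s + of_int j\<bar> \<longrightarrow> g (s + of_int j) = 0"
      by (rule AE_transl[OF gz])
  qed
  have Pz: "g (s + of_int j) = 0" if "P s" "0 \<le> s" "s \<le> 1" "j \<notin> J" for s j
  proof -
    have "j \<le> - int N - 2 \<or> j \<ge> int N + 1" using that(4) by (auto simp: J_def)
    then have "real N < \<bar>s + of_int j\<bar>"
    proof
      assume "j \<le> - int N - 2"
      then have "real_of_int j \<le> - real N - 2" by linarith
      then show ?thesis using that(3) by linarith
    next
      assume "j \<ge> int N + 1"
      then have "real_of_int j \<ge> real N + 1" by linarith
      then show ?thesis using that(2) by linarith
    qed
    then show ?thesis using that(1) unfolding P_def by blast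
  qed
  define GS where "GS s = (\<Sum>j\<in>J. g (s + of_int j))" for s
  have Psum: "(\<Sum>\<^sub>\<infinity>n::int. g (s + of_int n)) = GS s" if "P s" "0 \<le> s" "s \<le> 1" for s
  proof -
    have "(\<Sum>\<^sub>\<infinity>n::int. g (s + of_int n)) = (\<Sum>\<^sub>\<infinity>n\<in>J. g (s + of_int n))"
      by (rule infsum_cong_neutral) (use Pz[OF that] in auto)
    then show ?thesis using finJ by (simp add: GS_def)
  qed
  define EM where "EM M = {s \<in> E. s < 1 \<and> P s \<and> cmod (GS s) < \<epsilon> \<and> (\<forall>j\<in>J. cmod (g (s + of_int j)) \<le> M)}" for M :: real
  have p1: "Measurable.pred lebesgue (\<lambda>s. g (s + of_int j) = 0)" for j by measurable
  have p2: "Measurable.pred lebesgue (\<lambda>s. real N < \<bar>s + of_int j\<bar>)" for j by measurable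
  have p3: "Measurable.pred lebesgue (\<lambda>s. cmod (g (s + of_int j)) \<le> M)" for j M
  proof -
    have [measurable]: "(\<lambda>s. g (s + of_int j)) \<in> borel_measurable lebesgue" by (rule meas_transl[OF gm])
    show ?thesis by measurable
  qed
  have GSm[measurable]: "GS \<in> borel_measurable lebesgue" unfolding GS_def
    by (rule borel_measurable_sum) (rule meas_transl[OF gm])
  have p4: "Measurable.pred lebesgue (\<lambda>s. cmod (GS s) < \<epsilon>)" by measurable
  have pP: "Measurable.pred lebesgue P"
    unfolding P_def by (rule pred_intros_countable(1)[OF pred_intros_logic(4)[OF p2 p1]])
  have pE: "Measurable.pred lebesgue (\<lambda>s. s \<in> E)" by measurable
  have pl: "Measurable.pred lebesgue (\<lambda>s. s < (1::real))" by measurable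
  have p5: "Measurable.pred lebesgue (\<lambda>s. \<forall>j\<in>J. cmod (g (s + of_int j)) \<le> M)" for M
    by (rule pred_intros_countable_bounded(3)[OF p3])
  have EMm: "EM M \<in> sets lebesgue" for M
  proof -
    have "Measurable.pred lebesgue (\<lambda>s. s \<in> E \<and> s < 1 \<and> P s \<and> cmod (GS s) < \<epsilon> \<and> (\<forall>j\<in>J. cmod (g (s + of_int j)) \<le> M))"
      by (rule pred_intros_logic(3)[OF pE pred_intros_logic(3)[OF pl pred_intros_logic(3)[OF pP pred_intros_logic(3)[OF p4 p5]]]])
    then have "{s \<in> space lebesgue. s \<in> E \<and> s < 1 \<and> P s \<and> cmod (GS s) < \<epsilon> \<and> (\<forall>j\<in>J. cmod (g (s + of_int j)) \<le> M)} \<in> sets lebesgue"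
      unfolding pred_def .
    moreover have "{s \<in> space lebesgue. s \<in> E \<and> s < 1 \<and> P s \<and> cmod (GS s) < \<epsilon> \<and> (\<forall>j\<in>J. cmod (g (s + of_int j)) \<le> M)} = EM M"
      unfolding EM_def by (simp add: space_completion space_lborel space_borel)
    ultimately show ?thesis by (simp only:)
  qed
  have EMsub: "EM M \<subseteq> {0..1}" for M using Esub by (auto simp: EM_def)
  have EMfin: "emeasure lebesgue (EM M) < \<infinity>" for M
  proof -
    have "emeasure lebesgue (EM M) \<le> emeasure lebesgue {0..1::real}"
      by (rule emeasure_mono[OF EMsub]) simp
    then show ?thesis by (simp add: order_le_less_trans)
  qed
  have "\<exists>M::nat. measure lebesgue (EM (real M)) > 0"
  proof (rule ccontr)
    assume "\<not> ?thesis"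
    then have nz: "\<not> 0 < measure lebesgue (EM (real M))" for M by blast
    have z: "measure lebesgue (EM (real M)) = 0" for M
      using nz[of M] measure_nonneg[of lebesgue "EM (real M)"] by linarith
    have nM: "EM (real M) \<in> null_sets lebesgue" for M
    proof (rule null_setsI[OF _ EMm])
      have "emeasure lebesgue (EM (real M)) = ennreal (measure lebesgue (EM (real M)))"
        using EMfin[of "real M"] by (intro emeasure_eq_ennreal_measure) auto
      then show "emeasure lebesgue (EM (real M)) = 0" using z[of M] by (simp only: ennreal_0)
    qed
    have U: "(\<Union>M. EM (real M)) \<in> null_sets lebesgue" using nM by blast
    have one: "{1::real} \<in> null_sets lebesgue" using null_sets_completionI[OF countable_imp_null_set_lborel[of "{1::real}"]] by simp
    have "AE s in lebesgue. s \<notin> E"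
      using AP Eae AE_not_in[OF U] AE_not_in[OF one]
    proof eventually_elim
      case (elim s)
      show "s \<notin> E"
      proof
        assume sE: "s \<in> E"
        then have s01: "0 \<le> s" "s \<le> 1" using Esub by auto
        have s1: "s < 1" using elim(4) s01 by auto
        have small: "cmod (GS s) < \<epsilon>" using elim(2) sE Psum[OF elim(1) s01] by simp
        define M where "M = nat \<lceil>\<Sum>j\<in>J. cmod (g (s + of_int j))\<rceil>"
        have "cmod (g (s + of_int j)) \<le> real M" if "j \<in> J" for j
        proof -
          have "cmod (g (s + of_int j)) \<le> (\<Sum>j\<in>J. cmod (g (s + of_int j)))"
            by (rule member_le_sum) (use that finJ in auto)
          then show ?thesis unfolding M_def by linarith
        qed
        then have "s \<in> EM (real M)" using sE s1 elim(1) small by (auto simp: EM_def)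
        then show False using elim(3) by blast
      qed
    qed
    then have "emeasure lebesgue E = 0"
      using AE_iff_measurable[of E lebesgue "\<lambda>s. s \<notin> E"] Em by simp
    then show False using Epos by (simp add: measure_def)
  qed
  then obtain Mn :: nat where Mpos: "measure lebesgue (EM (real Mn)) > 0" by blast
  define E' where "E' = EM (real Mn)"
  define \<mu> where "\<mu> = measure lebesgue E'"
  have mu0: "0 < \<mu>" using Mpos by (simp add: \<mu>_def E'_def)
  have E'm[measurable]: "E' \<in> sets lebesgue" by (simp add: E'_def EMm)
  have E'sub: "E' \<subseteq> {0..<1}" using Esub by (auto simp: E'_def EM_def)
  have E'P: "P s" if "s \<in> E'" for s using that by (simp add: E'_def EM_def)
  have E'GS: "cmod (GS s) < \<epsilon>" if "s \<in> E'" for s using that by (simp add: E'_def EM_def)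
  have E'bnd: "cmod (g (s + of_int j)) \<le> real Mn" if "s \<in> E'" for s j
  proof (cases "j \<in> J")
    case True then show ?thesis using that by (simp add: E'_def EM_def)
  next
    case False
    have "s \<in> {0..<1}" using that E'sub by auto
    then show ?thesis using Pz[OF E'P[OF that] _ _ False] by simp
  qed
  define C0 where "C0 = real (card J) * real Mn"
  have C00: "0 \<le> C0" by (simp add: C0_def)
  define X where "X = (4 * real N + 3) * C0^2"
  define L :: nat where "L = nat \<lceil>2 * X / A\<rceil> + 2 * N + 2"
  define f where "f = (\<lambda>t. \<Sum>k<L. indicator E' (t - real k) :: complex)"
  have fL2: "f \<in> L2" using f_L2(1)[OF E'm E'sub] by (simp add: f_def)
  have fn: "l2norm_sq f = real L * \<mu>" using f_L2(2)[OF E'm E'sub] by (simp add: f_def \<mu>_def)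
  define \<phi> where "\<phi> = (\<lambda>(m::int, n::int). (cmod (l2inner f (modul (of_int m * 1) (transl (of_int n * 1) g))))^2)"
  have summ: "\<phi> summable_on UNIV" and low: "A * l2norm_sq f \<le> infsum \<phi> UNIV"
    using fr fL2 unfolding \<phi>_def by blast+
  define G where "G n s = (\<Sum>k<L. g (s + real k - of_int n))" for n s
  define h where "h n s = indicator E' s *\<^sub>R cnj (G n s)" for n s
  have coefeq: "l2inner f (modul (of_int m * 1) (transl (of_int n * 1) g)) = (LINT s|lebesgue. h n s * cnj (ee m s))" for m n
    unfolding f_def h_def G_def by (rule coef[OF gm E'm E'sub E'bnd])
  have Gre: "G n s = (\<Sum>j\<in>{-n..int L - 1 - n}. g (s + of_int j))" for n s
  proof -
    have "G n s = (\<Sum>k<L. (\<lambda>j. g (s + of_int j)) (int k - n))"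
      unfolding G_def by (intro sum.cong refl) (simp add: algebra_simps)
    also have "\<dots> = (\<Sum>j\<in>{-n..int L - 1 - n}. g (s + of_int j))" by (rule sum_reindex_int)
    finally show ?thesis .
  qed
  have GJ: "G n s = (\<Sum>j\<in>{-n..int L - 1 - n} \<inter> J. g (s + of_int j))" if "s \<in> E'" for n s
  proof -
    have s01: "0 \<le> s" "s \<le> 1" using that E'sub by auto
    show ?thesis unfolding Gre
      by (rule sum.mono_neutral_right) (use Pz[OF E'P[OF that] s01] in auto)
  qed
  have Gb: "cmod (G n s) \<le> C0" if "s \<in> E'" for n s
  proof -
    have "cmod (G n s) \<le> (\<Sum>j\<in>{-n..int L - 1 - n} \<inter> J. cmod (g (s + of_int j)))"
      unfolding GJ[OF that] by (rule norm_sum)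
    also have "\<dots> \<le> (\<Sum>j\<in>{-n..int L - 1 - n} \<inter> J. real Mn)"
      by (rule sum_mono) (rule E'bnd[OF that])
    also have "\<dots> = real (card ({-n..int L - 1 - n} \<inter> J)) * real Mn" by simp
    also have "\<dots> \<le> C0" unfolding C0_def
      by (intro mult_right_mono) (auto intro!: card_mono simp: finJ)
    finally show ?thesis .
  qed
  have Gmid: "G n s = GS s" if "s \<in> E'" "int N + 1 \<le> n" "n \<le> int L - int N - 1" for n s
  proof -
    have "{-n..int L - 1 - n} \<inter> J = J" using that(2,3) by (auto simp: J_def)
    then show ?thesis unfolding GJ[OF that(1)] GS_def by simp
  qed
  have Gout: "G n s = 0" if "s \<in> E'" "n \<notin> {-int N - 1 .. int L + int N}" for n s
  proof -
    have "{-n..int L - 1 - n} \<inter> J = {}" using that(2) by (auto simp: J_def)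
    then show ?thesis unfolding GJ[OF that(1)] by simp
  qed
  have Gm: "G n \<in> borel_measurable lebesgue" for n
    unfolding G_def add_diff_eq[symmetric] by (rule borel_measurable_sum) (rule meas_transl[OF gm])
  have hm: "h n \<in> borel_measurable lebesgue" for n
    unfolding h_def by (intro borel_measurable_scaleR borel_measurable_indicator cnj_meas Gm E'm)
  have hb: "cmod (h n s) \<le> C0" for n s
    using Gb[of s n] C00 by (cases "s \<in> E'") (simp_all add: h_def)
  have hs: "h n s = 0" if "s \<notin> {0..1}" for n s
    using that E'sub by (auto simp: h_def indicator_def)
  define b where "b n = (LINT s|lebesgue. (cmod (h n s))^2)" for n
  have bessel_n: "(\<Sum>m\<in>Ms. \<phi> (m, n)) \<le> b n" if "finite Ms" for Ms n
    using bessel[OF hm hb hs that, of n] unfolding \<phi>_def b_def coefeq by simp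
  have bnn: "0 \<le> b n" for n unfolding b_def by simp
  have bB: "b n \<le> c^2 * \<mu>" if c0: "0 \<le> c" and cb: "\<And>s. s \<in> E' \<Longrightarrow> cmod (G n s) \<le> c" for n c
  proof -
    have hsq: "(cmod (h n s))^2 \<le> c^2 * indicator E' s" for s
      using cb[of s] c0 by (cases "s \<in> E'") (simp_all add: h_def power_mono)
    have i1: "integrable lebesgue (\<lambda>s. (cmod (h n s))^2)"
    proof (rule integrable_bsupp[where B="C0^2" and a=0 and b=1])
      show "(\<lambda>s. (cmod (h n s))^2) \<in> borel_measurable lebesgue" using hm[of n] by measurable
      show "norm ((cmod (h n s))^2) \<le> C0^2" for s using hb[of n s] by (simp add: power_mono)
    qed (simp add: hs)
    have i2: "integrable lebesgue (\<lambda>s. c^2 * indicator E' s :: real)"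
    proof (rule integrable_bsupp[where B="c^2" and a=0 and b=1])
      show "(\<lambda>s. c^2 * indicator E' s :: real) \<in> borel_measurable lebesgue" by measurable
      show "norm (c^2 * indicator E' s :: real) \<le> c^2" for s by (simp add: indicator_def)
    qed (use E'sub in \<open>auto simp: indicator_def\<close>)
    have "b n \<le> (LINT s|lebesgue. c^2 * indicator E' s)"
      unfolding b_def by (rule integral_mono[OF i1 i2 hsq])
    also have "\<dots> = c^2 * \<mu>" by (simp add: \<mu>_def)
    finally show ?thesis .
  qed
  define R where "R = {-int N - 1 .. int L + int N}"
  define Mid where "Mid = {int N + 1 .. int L - int N - 1}"
  have MidR: "Mid \<subseteq> R" by (auto simp: Mid_def R_def)
  have finR: "finite R" by (simp add: R_def)
  have cardR: "card R = L + 2 * N + 2" by (simp add: R_def)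
  have L2: "2 * N + 2 \<le> L" by (simp add: L_def)
  have cardMid: "card Mid = L - 2 * N - 1" unfolding Mid_def using L2 by (simp add: nat_eq_iff of_nat_diff)
  have cardRM: "real (card (R - Mid)) = 4 * real N + 3"
  proof -
    have "card (R - Mid) = card R - card Mid" by (rule card_Diff_subset) (use MidR finR in \<open>auto intro: finite_subset\<close>)
    also have "\<dots> = 4 * N + 3" unfolding cardR cardMid using L2 by arith
    finally show ?thesis by simp
  qed
  have cardMid': "real (card Mid) \<le> real L" unfolding cardMid by simp
  define Bd where "Bd = X * \<mu> + real L * (\<epsilon>^2 * \<mu>)"
  have sumR: "(\<Sum>n\<in>R. b n) \<le> Bd"
  proof -
    have "(\<Sum>n\<in>R. b n) = (\<Sum>n\<in>R - Mid. b n) + (\<Sum>n\<in>Mid. b n)"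
      by (rule sum.subset_diff[OF MidR finR])
    also have "(\<Sum>n\<in>R - Mid. b n) \<le> real (card (R - Mid)) * (C0^2 * \<mu>)"
      by (rule sum_bounded_above) (rule bB[OF C00 Gb])
    also have "(\<Sum>n\<in>Mid. b n) \<le> real (card Mid) * (\<epsilon>^2 * \<mu>)"
    proof (rule sum_bounded_above)
      fix n assume "n \<in> Mid"
      then have n: "int N + 1 \<le> n" "n \<le> int L - int N - 1" by (auto simp: Mid_def)
      show "b n \<le> \<epsilon>^2 * \<mu>"
        by (rule bB) (use e0 Gmid[OF _ n] E'GS in \<open>auto simp: less_imp_le\<close>)
    qed
    also have "real (card (R - Mid)) * (C0^2 * \<mu>) + real (card Mid) * (\<epsilon>^2 * \<mu>) \<le> Bd"
      unfolding Bd_def cardRM X_def using cardMid' mu0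
      by (intro add_mono) (auto intro!: mult_right_mono)
    finally show ?thesis by simp
  qed
  have bout: "b n = 0" if "n \<notin> R" for n
    using bB[of 0 n] Gout[OF _ that[unfolded R_def]] bnn[of n] by simp
  have up: "infsum \<phi> UNIV \<le> Bd"
  proof (rule infsum_le_finite_sums[OF summ])
    fix F :: "(int \<times> int) set" assume F: "finite F" "F \<subseteq> UNIV"
    define Ms where "Ms = fst ` F"
    define Ns where "Ns = snd ` F"
    have fMs: "finite Ms" "finite Ns" using F by (simp_all add: Ms_def Ns_def)
    have "sum \<phi> F \<le> sum \<phi> (Ms \<times> Ns)"
      by (rule sum_mono2) (use fMs in \<open>auto simp: Ms_def Ns_def \<phi>_def intro: rev_image_eqI\<close>)
    also have "\<dots> = (\<Sum>m\<in>Ms. \<Sum>n\<in>Ns. \<phi> (m, n))" by (rule sum.cartesian_product')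
    also have "\<dots> = (\<Sum>n\<in>Ns. \<Sum>m\<in>Ms. \<phi> (m, n))" by (rule sum.swap)
    also have "\<dots> \<le> (\<Sum>n\<in>Ns. b n)" by (rule sum_mono) (rule bessel_n[OF fMs(1)])
    also have "\<dots> = (\<Sum>n\<in>Ns \<inter> R. b n)"
      by (rule sum.mono_neutral_right) (use fMs bout in auto)
    also have "\<dots> \<le> (\<Sum>n\<in>R. b n)"
      by (rule sum_mono2) (use finR bnn in auto)
    also have "\<dots> \<le> Bd" by (rule sumR)
    finally show "sum \<phi> F \<le> Bd" .
  qed
  have ineq: "A * (real L * \<mu>) \<le> X * \<mu> + real L * (A / 2) * \<mu>"
    using low up fn e2 unfolding Bd_def by (simp add: algebra_simps)
  have "(A * real L / 2 - X) * \<mu> = A * (real L * \<mu>) - (X * \<mu> + real L * (A / 2) * \<mu>)"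
    by (simp add: algebra_simps)
  with ineq have neg: "(A * real L / 2 - X) * \<mu> \<le> 0" by linarith
  have "2 * X / A \<le> real (nat \<lceil>2 * X / A\<rceil>)" by (rule real_nat_ceiling_ge)
  then have "2 * X / A < real L" unfolding L_def by simp
  then have "2 * X < A * real L" using A0 by (simp add: pos_divide_less_eq mult.commute)
  then have "0 < (A * real L / 2 - X) * \<mu>" using mu0 by (intro mult_pos_pos) simp_all
  with neg show False by simp
qed

end
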